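(* For every positive integer $N$, there exists an equal norm tight integer frame in $\mathcal{H}_3$ with $3N$ elements, and there exists an equal norm tight integer frame in $\mathcal{H}_3$ with $4N$ elements.
   Context: $\mathcal{H}_M$ is the real $M$-dimensional Hilbert space, identified with $\mathbb{R}^M$ via a fixed orthonormal basis. An equal norm tight integer frame (ENTIF) with $N$ elements in $\mathcal{H}_M$ is an $M\times N$ integer matrix $A$ of rank $M$ with $AA^T=\lambda I_M$ for some $\lambda>0$ and all columns of the same Euclidean norm. *)

theory Defs
  imports Complex_Main
begin

text \<open>An M x N integer matrix is represented as a function A :: nat => nat => int,
  where only the entries A i j with i < M and j < N are relevant.
  Column j is the vector (A 0 j, ..., A (M-1) j) in R^M.\<close>

definition rank_full_rows :: "nat \<Rightarrow> nat \<Rightarrow> (nat \<Rightarrow> nat \<Rightarrow> int) \<Rightarrow> bool" where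
  "rank_full_rows M N A \<longleftrightarrow>
     (\<forall>c :: nat \<Rightarrow> real. (\<forall>j<N. (\<Sum>i<M. c i * real_of_int (A i j)) = 0) \<longrightarrow> (\<forall>i<M. c i = 0))"

definition is_ENTIF :: "nat \<Rightarrow> nat \<Rightarrow> (nat \<Rightarrow> nat \<Rightarrow> int) \<Rightarrow> bool" where
  "is_ENTIF M N A \<longleftrightarrow>
     rank_full_rows M N A \<and>
     (\<exists>lam::real. lam > 0 \<and>
        (\<forall>i<M. \<forall>k<M. real_of_int (\<Sum>j<N. A i j * A k j) = (if i = k then lam else 0))) \<and>
     (\<forall>j<N. \<forall>j'<N. (\<Sum>i<M. (A i j)\<^sup>2) = (\<Sum>i<M. (A i j')\<^sup>2))"

end

theory Submission
  imports Defs
begin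

lemma sum_mod_rep:
  fixes f :: "nat \<Rightarrow> 'a::comm_semiring_1"
  shows "(\<Sum>j<m*N. f (j mod m)) = of_nat N * (\<Sum>k<m. f k)"
proof (induction N)
  case 0 then show ?case by simp
next
  case (Suc N)
  have "(\<Sum>j<m*Suc N. f (j mod m)) = (\<Sum>j<m*N. f (j mod m)) + (\<Sum>j\<in>{m*N..<m*N+m}. f (j mod m))"
    by (simp add: lessThan_atLeast0 sum.atLeastLessThan_concat add.commute)
  also have "(\<Sum>j\<in>{m*N..<m*N+m}. f (j mod m)) = (\<Sum>k<m. f k)"
  proof -
    have "(\<Sum>j\<in>{m*N..<m*N+m}. f (j mod m)) = (\<Sum>k\<in>{0..<m}. f ((k + m*N) mod m))"
      using sum.shift_bounds_nat_ivl[of "\<lambda>j. f (j mod m)" 0 "m*N" m] by (simp add: add.commute)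
    also have "\<dots> = (\<Sum>k\<in>{0..<m}. f k)" by (intro sum.cong) auto
    finally show ?thesis by (simp add: lessThan_atLeast0)
  qed
  finally show ?case using Suc by (simp add: algebra_simps)
qed

lemma sum3: "(\<Sum>i<(3::nat). f i) = f 0 + f 1 + (f 2 :: 'a::comm_monoid_add)"
  by (simp add: eval_nat_numeral add.assoc)
lemma sum4: "(\<Sum>i<(4::nat). f i) = f 0 + f 1 + f 2 + (f 3 :: 'a::comm_monoid_add)"
  by (simp add: eval_nat_numeral add.assoc)
lemma lt3: "(i::nat) < 3 \<Longrightarrow> i = 0 \<or> i = 1 \<or> i = 2" by auto
lemma lt4: "(i::nat) < 4 \<Longrightarrow> i = 0 \<or> i = 1 \<or> i = 2 \<or> i = 3" by auto

definition B3 :: "nat \<Rightarrow> nat \<Rightarrow> int" where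
  "B3 i k = (if i = k then 1 else 0)"

definition B4 :: "nat \<Rightarrow> nat \<Rightarrow> int" where
  "B4 i k = (if k = 0 then 1 else if i + 1 = k then 1 else -1)"

lemma ex3: assumes "N \<ge> 1" shows "is_ENTIF 3 (3 * N) (\<lambda>i j. B3 i (j mod 3))"
  unfolding is_ENTIF_def
proof (intro conjI)
  show "rank_full_rows 3 (3 * N) (\<lambda>i j. B3 i (j mod 3))"
    unfolding rank_full_rows_def
  proof (intro allI impI)
    fix c :: "nat \<Rightarrow> real" and i :: nat
    assume h: "\<forall>j<3*N. (\<Sum>i<3. c i * real_of_int (B3 i (j mod 3))) = 0" and i: "i < 3"
    have "3 \<le> 3*N" using assms by simp
    then have "i < 3*N" using i by linarith
    from h[rule_format, OF this] lt3[OF i] show "c i = 0"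
      by (auto simp: B3_def sum3 sum4)
  qed
  show "\<exists>lam::real. lam > 0 \<and> (\<forall>i<3. \<forall>k<3. real_of_int (\<Sum>j<3*N. B3 i (j mod 3) * B3 k (j mod 3)) = (if i = k then lam else 0))"
  proof (intro exI[of _ "real N"] conjI allI impI)
    show "real N > 0" using assms by simp
    fix i k :: nat assume a: "i < 3" "k < 3"
    from lt3[OF a(1)] lt3[OF a(2)] show "real_of_int (\<Sum>j<3*N. B3 i (j mod 3) * B3 k (j mod 3)) = (if i = k then real N else 0)"
      by (subst sum_mod_rep[where f="\<lambda>j. B3 i j * B3 k j"])
         (auto simp: B3_def sum3 sum4)
  qed
  show "\<forall>j<3*N. \<forall>j'<3*N. (\<Sum>i<3. (B3 i (j mod 3))\<^sup>2) = (\<Sum>i<3. (B3 i (j' mod 3))\<^sup>2)"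
  proof -
    have "\<And>j. (\<Sum>i<3. (B3 i (j mod 3))\<^sup>2) = 1"
    proof -
      fix j :: nat have "j mod 3 < 3" by simp
      from lt3[OF this] show "(\<Sum>i<3. (B3 i (j mod 3))\<^sup>2) = 1"
        by (auto simp: B3_def sum3 sum4)
    qed
    then show ?thesis by simp
  qed
qed

lemma ex4: assumes "N \<ge> 1" shows "is_ENTIF 3 (4 * N) (\<lambda>i j. B4 i (j mod 4))"
  unfolding is_ENTIF_def
proof (intro conjI)
  show "rank_full_rows 3 (4 * N) (\<lambda>i j. B4 i (j mod 4))"
    unfolding rank_full_rows_def
  proof (intro allI impI)
    fix c :: "nat \<Rightarrow> real" and i :: nat
    assume h: "\<forall>j<4*N. (\<Sum>i<3. c i * real_of_int (B4 i (j mod 4))) = 0" and i: "i < 3"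
    have "4 \<le> 4*N" using assms by simp
    then have "0 < 4*N" "1 < 4*N" "2 < 4*N" "3 < 4*N" by linarith+
    from h[rule_format, OF this(1)] h[rule_format, OF this(2)] h[rule_format, OF this(3)] h[rule_format, OF this(4)]
    have "c 0 + c 1 + c 2 = 0" "c 0 - c 1 - c 2 = 0" "- c 0 + c 1 - c 2 = 0" "- c 0 - c 1 + c 2 = 0"
      by (simp_all add: B4_def sum3 sum4)
    then have "c 0 = 0" "c 1 = 0" "c 2 = 0" by linarith+
    then show "c i = 0" using lt3[OF i] by auto
  qed
  show "\<exists>lam::real. lam > 0 \<and> (\<forall>i<3. \<forall>k<3. real_of_int (\<Sum>j<4*N. B4 i (j mod 4) * B4 k (j mod 4)) = (if i = k then lam else 0))"
  proof (intro exI[of _ "4 * real N"] conjI allI impI)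
    show "4 * real N > 0" using assms by simp
    fix i k :: nat assume a: "i < 3" "k < 3"
    from lt3[OF a(1)] lt3[OF a(2)] show "real_of_int (\<Sum>j<4*N. B4 i (j mod 4) * B4 k (j mod 4)) = (if i = k then 4 * real N else 0)"
      by (subst sum_mod_rep[where f="\<lambda>j. B4 i j * B4 k j"])
         (auto simp: B4_def sum3 sum4)
  qed
  show "\<forall>j<4*N. \<forall>j'<4*N. (\<Sum>i<3. (B4 i (j mod 4))\<^sup>2) = (\<Sum>i<3. (B4 i (j' mod 4))\<^sup>2)"
  proof -
    have "\<And>j. (\<Sum>i<3. (B4 i (j mod 4))\<^sup>2) = 3"
    proof -
      fix j :: nat have "j mod 4 < 4" by simp
      from lt4[OF this] show "(\<Sum>i<3. (B4 i (j mod 4))\<^sup>2) = 3"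
        by (auto simp: B4_def sum3 sum4)
    qed
    then show ?thesis by simp
  qed
qed

theorem theorem4p9:
  fixes N :: nat
  assumes "N \<ge> 1"
  shows "(\<exists>A. is_ENTIF 3 (3 * N) A) \<and> (\<exists>A. is_ENTIF 3 (4 * N) A)"
  using ex3[OF assms] ex4[OF assms] by blast

end
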